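(* For every integer $g$ there is $t=t(g)$ such that for every $k\ge t$ there is a $k$-vertex exactly-$(2,t)$-degenerate bipartite graph of girth at least $g$.
   Context: A graph is exactly-$(2,t)$-degenerate if it can be obtained from a set of $t$ isolated vertices by repeatedly adding a new vertex adjacent to exactly $2$ of the existing vertices. The girth of a graph is the length of its shortest cycle (infinite if the graph has no cycle). *)

theory Defs
  imports Main
begin

definition simple_graph :: "'a set \<Rightarrow> ('a \<Rightarrow> 'a \<Rightarrow> bool) \<Rightarrow> bool" where
  "simple_graph V E \<longleftrightarrow> finite V \<and> (\<forall>x y. E x y \<longrightarrow> x \<in> V \<and> y \<in> V) \<and>
     (\<forall>x y. E x y \<longrightarrow> E y x) \<and> (\<forall>x. \<not> E x x)"

text \<open>Since every edge joins
  a vertex to an earlier one, this says precisely that the graph arises from t isolated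
  vertices by repeatedly adding a new vertex adjacent to exactly 2 existing vertices.\<close>
definition exactly_2_t_degenerate :: "nat \<Rightarrow> 'a set \<Rightarrow> ('a \<Rightarrow> 'a \<Rightarrow> bool) \<Rightarrow> bool" where
  "exactly_2_t_degenerate t V E \<longleftrightarrow>
     (\<exists>vs. distinct vs \<and> set vs = V \<and> t \<le> length vs \<and>
        (\<forall>i j. i < t \<and> j < t \<longrightarrow> \<not> E (vs ! i) (vs ! j)) \<and>
        (\<forall>i. t \<le> i \<and> i < length vs \<longrightarrow> card {j. j < i \<and> E (vs ! i) (vs ! j)} = 2))"

definition bipartite :: "'a set \<Rightarrow> ('a \<Rightarrow> 'a \<Rightarrow> bool) \<Rightarrow> bool" where
  "bipartite V E \<longleftrightarrow> (\<exists>A. A \<subseteq> V \<and> (\<forall>x y. E x y \<longrightarrow> (x \<in> A \<longleftrightarrow> y \<notin> A)))"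

definition is_cycle :: "'a set \<Rightarrow> ('a \<Rightarrow> 'a \<Rightarrow> bool) \<Rightarrow> 'a list \<Rightarrow> bool" where
  "is_cycle V E cs \<longleftrightarrow> 3 \<le> length cs \<and> distinct cs \<and> set cs \<subseteq> V \<and>
     (\<forall>i. Suc i < length cs \<longrightarrow> E (cs ! i) (cs ! Suc i)) \<and> E (last cs) (hd cs)"

text \<open>Girth at least g: every cycle has length at least g (vacuous if acyclic,
  i.e. infinite girth).\<close>
definition girth_at_least :: "nat \<Rightarrow> 'a set \<Rightarrow> ('a \<Rightarrow> 'a \<Rightarrow> bool) \<Rightarrow> bool" where
  "girth_at_least g V E \<longleftrightarrow> (\<forall>cs. is_cycle V E cs \<longrightarrow> g \<le> length cs)"

end

theory Submission
  imports Defs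
begin

fun chain :: "('a \<Rightarrow> 'a \<Rightarrow> bool) \<Rightarrow> 'a list \<Rightarrow> bool" where
  "chain E [] = True"
| "chain E [x] = True"
| "chain E (x # y # xs) = (E x y \<and> chain E (y # xs))"

lemma chain_Cons: "chain E (x # xs) = (xs = [] \<or> (E x (hd xs) \<and> chain E xs))"
  by (cases xs) auto

lemma chain_append: "chain E (xs @ ys) = (chain E xs \<and> chain E ys \<and> (xs \<noteq> [] \<and> ys \<noteq> [] \<longrightarrow> E (last xs) (hd ys)))"
  by (induction xs) (auto simp: chain_Cons)

lemma all_nat_split: "(\<forall>i::nat. P i) = (P 0 \<and> (\<forall>i. P (Suc i)))"
  by (metis not0_implies_Suc)

lemma chain_nth: "chain E xs = (\<forall>i. Suc i < length xs \<longrightarrow> E (xs!i) (xs!Suc i))"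
proof (induction E xs rule: chain.induct)
  case (3 E x y xs)
  have "(\<forall>i. Suc i < length (x # y # xs) \<longrightarrow> E ((x # y # xs)!i) ((x # y # xs)!Suc i))
      = (E x y \<and> (\<forall>i. Suc i < length (y # xs) \<longrightarrow> E ((y # xs)!i) ((y # xs)!Suc i)))"
    by (subst all_nat_split) simp
  then show ?case using 3 by simp
qed auto

lemma chain_rev: "(\<And>x y. E x y \<Longrightarrow> E y x) \<Longrightarrow> chain E xs \<Longrightarrow> chain E (rev xs)"
  by (induction xs) (auto simp: chain_append chain_Cons last_rev)

lemma chain_mono: "chain E' xs \<Longrightarrow> (\<And>x y. x \<in> set xs \<Longrightarrow> y \<in> set xs \<Longrightarrow> E' x y \<Longrightarrow> E x y) \<Longrightarrow> chain E xs"
  by (induction E' xs rule: chain.induct) auto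

inductive reach :: "('a \<Rightarrow> 'a \<Rightarrow> bool) \<Rightarrow> nat \<Rightarrow> 'a \<Rightarrow> 'a \<Rightarrow> bool" for E where
  rrefl: "reach E n x x"
| rstep: "E x z \<Longrightarrow> reach E n z y \<Longrightarrow> reach E (Suc n) x y"

lemma reach_mono: "reach E m x y \<Longrightarrow> m \<le> n \<Longrightarrow> reach E n x y"
proof (induction arbitrary: n rule: reach.induct)
  case (rrefl m x) show ?case by (rule reach.rrefl)
next
  case (rstep x z m y)
  then obtain n' where "n = Suc n'" "m \<le> n'" by (cases n) auto
  then show ?case using rstep by (auto intro: reach.rstep)
qed

lemma chain_reach: "chain E ws \<Longrightarrow> ws \<noteq> [] \<Longrightarrow> reach E (length ws - 1) (hd ws) (last ws)"
  by (induction E ws rule: chain.induct) (auto intro: reach.intros)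

lemma reach0: "reach E 0 x y \<Longrightarrow> y = x"
  by (erule reach.cases) auto

lemma reach_Suc: "reach E (Suc n) x y \<Longrightarrow> y = x \<or> (\<exists>z. E x z \<and> reach E n z y)"
  by (erule reach.cases) auto

lemma ball_card:
  assumes fin: "\<And>x. finite {y. E x y}" and deg: "\<And>x. card {y. E x y} \<le> 4"
  shows "finite {y. reach E r x y} \<and> card {y. reach E r x y} \<le> 5 ^ r"
proof (induction r arbitrary: x)
  case 0
  have e: "{y. reach E 0 x y} = {x}" using reach0 by (auto intro: reach.rrefl)
  show ?case unfolding e by simp
next
  case (Suc r)
  let ?U = "\<Union>z\<in>{z. E x z}. {y. reach E r z y}"
  have sub: "{y. reach E (Suc r) x y} \<subseteq> insert x ?U"
  proof
    fix y assume "y \<in> {y. reach E (Suc r) x y}"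
    then have "y = x \<or> (\<exists>z. E x z \<and> reach E r z y)" using reach_Suc by simp
    then show "y \<in> insert x ?U" by blast
  qed
  have fU: "finite ?U"
  proof (rule finite_UN_I)
    show "finite {z. E x z}" by (rule fin)
    fix z show "finite {y. reach E r z y}" using Suc.IH[of z] by (rule conjunct1)
  qed
  have "card ?U \<le> (\<Sum>z\<in>{z. E x z}. card {y. reach E r z y})"
    by (rule card_UN_le) (rule fin)
  also have "\<dots> \<le> (\<Sum>z\<in>{z. E x z}. 5 ^ r)"
  proof (rule sum_mono)
    fix z show "card {y. reach E r z y} \<le> 5 ^ r" using Suc.IH[of z] by (rule conjunct2)
  qed
  also have "\<dots> = card {z. E x z} * 5 ^ r" by simp
  also have "\<dots> \<le> 4 * 5 ^ r" using deg by simp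
  finally have cU: "card ?U \<le> 4 * 5 ^ r" .
  have "card (insert x ?U) \<le> Suc (card ?U)" using fU by (simp add: card_insert_if)
  moreover have "card {y. reach E (Suc r) x y} \<le> card (insert x ?U)"
    using sub fU by (intro card_mono) auto
  moreover have "(1::nat) \<le> 5 ^ r" by simp
  ultimately have "card {y. reach E (Suc r) x y} \<le> 5 ^ Suc r" using cU
    by (simp only: power_Suc)
  moreover have "finite {y. reach E (Suc r) x y}" using sub fU finite_subset by blast
  ultimately show ?case by simp
qed

lemma hd_neq_last: "distinct ws \<Longrightarrow> 2 \<le> length ws \<Longrightarrow> hd ws \<noteq> last ws"
proof (cases ws)
  case (Cons a l)
  assume "distinct ws" "2 \<le> length ws"
  then have "l \<noteq> []" "a \<notin> set l" using Cons by auto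
  then show ?thesis using Cons last_in_set by fastforce
qed simp


lemma cycle_through:
  assumes cyc: "is_cycle V E' cs" and kin: "k \<in> set cs"
    and nb1: "\<And>y. E' k y \<Longrightarrow> y = u \<or> y = v" and nb2: "\<And>y. E' y k \<Longrightarrow> y = u \<or> y = v"
  shows "\<exists>ws. chain E' ws \<and> k \<notin> set ws \<and> set ws \<subseteq> set cs \<and> length ws + 1 = length cs
     \<and> ws \<noteq> [] \<and> hd ws \<in> {u,v} \<and> last ws \<in> {u,v} \<and> hd ws \<noteq> last ws"
proof -
  from kin obtain xs ys where cs: "cs = xs @ k # ys" by (meson split_list)
  have ch: "chain E' cs" using cyc unfolding is_cycle_def by (simp add: chain_nth)
  have wrap: "E' (last cs) (hd cs)" using cyc unfolding is_cycle_def by simp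
  have len: "3 \<le> length cs" and dist: "distinct cs" using cyc unfolding is_cycle_def by auto
  define ws where "ws = ys @ xs"
  have chxs: "chain E' xs" and chky: "chain E' (k # ys)" and j1: "xs \<noteq> [] \<longrightarrow> E' (last xs) k"
    using ch unfolding cs chain_append by auto
  have chys: "chain E' ys" and j2: "ys \<noteq> [] \<longrightarrow> E' k (hd ys)" using chky by (auto simp: chain_Cons)
  have lastcs: "ys \<noteq> [] \<Longrightarrow> last cs = last ys" "ys = [] \<Longrightarrow> last cs = k" using cs by auto
  have hdcs: "xs \<noteq> [] \<Longrightarrow> hd cs = hd xs" "xs = [] \<Longrightarrow> hd cs = k" using cs by auto
  have chws: "chain E' ws" unfolding ws_def chain_append using chxs chys wrap lastcs hdcs by auto
  have kn: "k \<notin> set ws" using dist cs ws_def by auto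
  have dws: "distinct ws" using dist cs ws_def by auto
  have lws: "length ws + 1 = length cs" using cs ws_def by simp
  then have ne: "ws \<noteq> []" and l2: "2 \<le> length ws" using len by auto
  have sws: "set ws \<subseteq> set cs" using cs ws_def by auto
  have hdw: "hd ws \<in> {u,v}"
  proof (cases "ys = []")
    case True
    then have "xs \<noteq> []" using ne ws_def by auto
    then have "hd ws = hd xs" "E' k (hd xs)" using True ws_def wrap lastcs hdcs by auto
    then show ?thesis using nb1 by auto
  next
    case False
    then have "hd ws = hd ys" using ws_def by simp
    then show ?thesis using nb1 j2 False by auto
  qed
  have lastw: "last ws \<in> {u,v}"
  proof (cases "xs = []")
    case True
    then have "ys \<noteq> []" using ne ws_def by auto
    then have "last ws = last ys" "E' (last ys) k" using True ws_def wrap lastcs hdcs by auto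
    then show ?thesis using nb2 by auto
  next
    case False
    then have "last ws = last xs" using ws_def by simp
    then show ?thesis using nb2 j1 False by auto
  qed
  show ?thesis using chws kn sws lws ne hdw lastw hd_neq_last[OF dws l2] by blast
qed

definition ginv :: "nat \<Rightarrow> nat \<Rightarrow> nat \<Rightarrow> (nat \<Rightarrow> nat \<Rightarrow> bool) \<Rightarrow> (nat \<Rightarrow> bool) \<Rightarrow> bool" where
 "ginv g t k E col \<longleftrightarrow>
   (\<forall>x y. E x y \<longrightarrow> x < k \<and> y < k) \<and> (\<forall>x y. E x y \<longrightarrow> E y x) \<and> (\<forall>x. \<not> E x x) \<and>
   (\<forall>i j. i < t \<and> j < t \<longrightarrow> \<not> E i j) \<and>
   (\<forall>i. t \<le> i \<and> i < k \<longrightarrow> card {j. j < i \<and> E i j} = 2) \<and>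
   (\<forall>x y. E x y \<longrightarrow> col x \<noteq> col y) \<and>
   girth_at_least g {0..<k} E \<and>
   (\<forall>x. card {y. E x y} \<le> 4) \<and>
   (\<Sum>x<k. card {y. E x y}) = 4 * (k - t)"

lemma ginv_base: "ginv g t t (\<lambda>_ _. False) (\<lambda>_. True)"
  unfolding ginv_def girth_at_least_def is_cycle_def by simp

lemma ginv_final:
  assumes "ginv g t k E col" "t \<le> k"
  shows "simple_graph {0..<k} E \<and> card {0..<k} = k \<and> exactly_2_t_degenerate t {0..<k} E \<and>
     bipartite {0..<k} E \<and> girth_at_least g {0..<k} E"
proof -
  note G = assms(1)[unfolded ginv_def]
  have "simple_graph {0..<k} E" unfolding simple_graph_def using G by auto
  moreover have "bipartite {0..<k} E" unfolding bipartite_def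
    by (rule exI[of _ "{x\<in>{0..<k}. col x}"]) (use G in fastforce)
  moreover have "exactly_2_t_degenerate t {0..<k} E" unfolding exactly_2_t_degenerate_def
  proof (rule exI[of _ "[0..<k]"], intro conjI allI impI)
    show "\<not> E ([0..<k] ! i) ([0..<k] ! j)" if "i < t \<and> j < t" for i j
      using that G assms(2) by simp
    show "card {j. j < i \<and> E ([0..<k] ! i) ([0..<k] ! j)} = 2" if "t \<le> i \<and> i < length [0..<k]" for i
    proof -
      have "{j. j < i \<and> E ([0..<k] ! i) ([0..<k] ! j)} = {j. j < i \<and> E i j}" using that by auto
      then show ?thesis using that G by simp
    qed
  qed (use assms(2) in auto)
  ultimately show ?thesis using G by simp
qed


lemma ginv_step:
  assumes I: "ginv g t k E col" and tk: "t \<le> k" and tdef: "t = 2 * 5 ^ g + 2"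
  shows "\<exists>E' col'. ginv g t (Suc k) E' col'"
proof -
  note G = I[unfolded ginv_def]
  have inV: "\<And>x y. E x y \<Longrightarrow> x < k \<and> y < k" and sym: "\<And>x y. E x y \<Longrightarrow> E y x"
    and irr: "\<And>x. \<not> E x x" and indep: "\<And>i j. i < t \<Longrightarrow> j < t \<Longrightarrow> \<not> E i j"
    and bk: "\<And>i. t \<le> i \<Longrightarrow> i < k \<Longrightarrow> card {j. j < i \<and> E i j} = 2"
    and colp: "\<And>x y. E x y \<Longrightarrow> col x \<noteq> col y"
    and gir: "girth_at_least g {0..<k} E"
    and deg: "\<And>x. card {y. E x y} \<le> 4"
    and dsum: "(\<Sum>x<k. card {y. E x y}) = 4 * (k - t)"
    using G by blast+
  define D where "D x = card {y. E x y}" for x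
  have finN: "\<And>x. finite {y. E x y}"
    by (rule finite_subset[of _ "{0..<k}"]) (use inV in auto)
  define Av where "Av = {x\<in>{0..<k}. D x \<le> 3}"
  define N4 where "N4 = {x\<in>{0..<k}. \<not> D x \<le> 3}"
  have "4 * card N4 = (\<Sum>x\<in>N4. 4)" by simp
  also have "\<dots> \<le> (\<Sum>x\<in>N4. D x)" by (rule sum_mono) (auto simp: N4_def)
  also have "\<dots> \<le> (\<Sum>x\<in>{0..<k}. D x)" by (rule sum_mono2) (auto simp: N4_def)
  also have "\<dots> = 4 * (k - t)" using dsum by (simp add: D_def lessThan_atLeast0)
  finally have cN4: "card N4 \<le> k - t" by simp
  have "{0..<k} = Av \<union> N4" "Av \<inter> N4 = {}" by (auto simp: Av_def N4_def)
  then have "k = card Av + card N4"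
    by (metis card_Un_disjoint card_atLeastLessThan finite_Un finite_atLeastLessThan diff_zero)
  then have cAv: "t \<le> card Av" using cN4 tk by linarith
  define AT where "AT = {x\<in>Av. col x}"
  define AF where "AF = {x\<in>Av. \<not> col x}"
  have "Av = AT \<union> AF" "AT \<inter> AF = {}" by (auto simp: AT_def AF_def)
  moreover have "finite Av" by (simp add: Av_def)
  ultimately have "card Av = card AT + card AF"
    by (metis card_Un_disjoint finite_Un)
  then obtain C c where CAv: "C \<subseteq> Av" and Cc: "\<And>x. x \<in> C \<Longrightarrow> col x = c" and cC: "5 ^ g < card C"
  proof (cases "5 ^ g < card AT")
    case True
    show ?thesis by (rule that[of AT True]) (use True in \<open>auto simp: AT_def\<close>)
  next
    case False
    then have "5 ^ g < card AF" using cAv tdef \<open>card Av = card AT + card AF\<close> by linarith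
    show ?thesis by (rule that[of AF False]) (use \<open>5 ^ g < card AF\<close> in \<open>auto simp: AF_def\<close>)
  qed
  have "C \<noteq> {}" using cC by auto
  then obtain u where uC: "u \<in> C" by blast
  define B where "B = {y. reach E g u y}"
  have fB: "finite B" and cB: "card B \<le> 5 ^ g" using ball_card[OF finN deg, where r = g and x = u] by (auto simp: B_def)
  have "\<not> C \<subseteq> B"
  proof
    assume "C \<subseteq> B"
    then have "card C \<le> card B" using fB by (rule card_mono[rotated])
    then show False using cC cB by linarith
  qed
  then obtain v where vC: "v \<in> C" and vB: "v \<notin> B" by blast
  have uB: "u \<in> B" by (simp add: B_def reach.rrefl)
  have uv: "u \<noteq> v" using uB vB by auto
  have uk: "u < k" "D u \<le> 3" using uC CAv by (auto simp: Av_def)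
  have vk: "v < k" "D v \<le> 3" using vC CAv by (auto simp: Av_def)
  have cu: "col u = c" "col v = c" using uC vC Cc by auto
  define E' where "E' x y \<longleftrightarrow> E x y \<or> (x = k \<and> (y = u \<or> y = v)) \<or> (y = k \<and> (x = u \<or> x = v))" for x y
  define col' where "col' = col(k := \<not> c)"
  have kE: "\<And>y. \<not> E k y" "\<And>y. \<not> E y k" using inV by blast+
  have E'old: "\<And>x y. x \<noteq> k \<Longrightarrow> y \<noteq> k \<Longrightarrow> E' x y = E x y" by (auto simp: E'_def)
  have nb1: "\<And>y. E' k y \<Longrightarrow> y = u \<or> y = v" using kE uk vk by (auto simp: E'_def)
  have nb2: "\<And>y. E' y k \<Longrightarrow> y = u \<or> y = v" using kE uk vk by (auto simp: E'_def)
  have N': "{y. E' x y} = {y. E x y} \<union> (if x = u \<or> x = v then {k} else {}) \<union> (if x = k then {u,v} else {})" for x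
    using kE uk vk by (auto simp: E'_def)
  have D'old: "card {y. E' x y} = D x + (if x = u \<or> x = v then 1 else 0)" if "x < k" for x
  proof -
    have "{y. E' x y} = {y. E x y} \<union> (if x = u \<or> x = v then {k} else {})" using N'[of x] that by auto
    moreover have "k \<notin> {y. E x y}" using kE by auto
    ultimately show ?thesis using finN[of x] by (auto simp: D_def)
  qed
  have D'k: "card {y. E' k y} = 2"
  proof -
    have "{y. E' k y} = {u, v}" using N'[of k] kE uk vk by auto
    then show ?thesis using uv by simp
  qed
  have D'big: "{y. E' x y} = {}" if "k < x" for x using that inV uk vk by (auto simp: E'_def) (use inV in fastforce)
  have "ginv g t (Suc k) E' col'"
    unfolding ginv_def
  proof (intro conjI allI impI)
    fix x y assume "E' x y" then show "x < Suc k" using uk vk by (auto simp: E'_def dest: inV)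
  next
    fix x y assume "E' x y" then show "y < Suc k" using uk vk by (auto simp: E'_def dest: inV)
  next
    fix x y assume "E' x y" then show "E' y x" using sym by (auto simp: E'_def)
  next
    fix x show "\<not> E' x x" using irr uk vk by (auto simp: E'_def)
  next
    fix i j assume "i < t \<and> j < t" then show "\<not> E' i j" using indep tk E'old by auto
  next
    fix i assume i: "t \<le> i \<and> i < Suc k"
    show "card {j. j < i \<and> E' i j} = 2"
    proof (cases "i = k")
      case True
      have "{j. j < i \<and> E' i j} = {u, v}" using True kE uk vk by (auto simp: E'_def)
      then show ?thesis using uv by simp
    next
      case False
      then have "{j. j < i \<and> E' i j} = {j. j < i \<and> E i j}" using i E'old by auto
      then show ?thesis using bk i False by simp
    qed
  next
    fix x y assume "E' x y" then show "col' x \<noteq> col' y"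
      using colp cu kE uk vk by (auto simp: E'_def col'_def)
  next
    show "girth_at_least g {0..<Suc k} E'" unfolding girth_at_least_def
    proof (intro allI impI)
      fix cs assume cyc: "is_cycle {0..<Suc k} E' cs"
      show "g \<le> length cs"
      proof (cases "k \<in> set cs")
        case False
        have "is_cycle {0..<k} E cs"
          using cyc False unfolding is_cycle_def
        proof (intro conjI allI impI)
          assume c: "3 \<le> length cs \<and> distinct cs \<and> set cs \<subseteq> {0..<Suc k} \<and>
              (\<forall>i. Suc i < length cs \<longrightarrow> E' (cs ! i) (cs ! Suc i)) \<and> E' (last cs) (hd cs)"
          show "set cs \<subseteq> {0..<k}" using c False by (auto simp: less_Suc_eq)
          fix i assume "Suc i < length cs"
          moreover then have "cs ! i \<in> set cs" "cs ! Suc i \<in> set cs" by auto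
          ultimately show "E (cs ! i) (cs ! Suc i)" using c False E'old by metis
        next
          assume c: "3 \<le> length cs \<and> distinct cs \<and> set cs \<subseteq> {0..<Suc k} \<and>
              (\<forall>i. Suc i < length cs \<longrightarrow> E' (cs ! i) (cs ! Suc i)) \<and> E' (last cs) (hd cs)"
          then have "cs \<noteq> []" by auto
          then have "last cs \<in> set cs" "hd cs \<in> set cs" by auto
          then show "E (last cs) (hd cs)" using c False E'old by metis
        qed auto
        then show ?thesis using gir unfolding girth_at_least_def by blast
      next
        case True
        obtain ws where ws: "chain E' ws" "k \<notin> set ws" "length ws + 1 = length cs" "ws \<noteq> []"
          "hd ws \<in> {u,v}" "last ws \<in> {u,v}" "hd ws \<noteq> last ws"
          using cycle_through[OF cyc True nb1 nb2] by blast
        have chE: "chain E ws" using ws(1) by (rule chain_mono) (use ws(2) E'old in metis)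
        obtain zs where zs: "chain E zs" "zs \<noteq> []" "length zs = length ws" "hd zs = u" "last zs = v"
        proof (cases "hd ws = u")
          case True
          then have "last ws = v" using ws by auto
          then show ?thesis using that[of ws] chE ws True by auto
        next
          case False
          then have "hd ws = v" "last ws = u" using ws by auto
          then show ?thesis using that[of "rev ws"] chain_rev[OF sym chE] ws
            by (auto simp: hd_rev last_rev)
        qed
        have r: "reach E (length zs - 1) u v" using chain_reach[OF zs(1) zs(2)] zs by simp
        show ?thesis
        proof (rule ccontr)
          assume "\<not> g \<le> length cs"
          then have "length zs - 1 \<le> g" using zs ws by linarith
          then have "reach E g u v" by (rule reach_mono[OF r])
          then show False using vB unfolding B_def by simp
        qed
      qed
    qed
  next
    fix x show "card {y. E' x y} \<le> 4"
    proof -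
      consider "x < k" | "x = k" | "k < x" by linarith
      then show ?thesis
      proof cases
        case 1 then show ?thesis using D'old[OF 1] uk vk deg[of x] by (auto simp: D_def)
      next
        case 2 then show ?thesis using D'k by simp
      next
        case 3 then show ?thesis using D'big[OF 3] by simp
      qed
    qed
  next
    have "(\<Sum>x<Suc k. card {y. E' x y}) = (\<Sum>x<k. card {y. E' x y}) + 2" using D'k by simp
    also have "(\<Sum>x<k. card {y. E' x y}) = (\<Sum>x<k. D x + ((if x = u then 1 else 0) + (if x = v then 1 else 0)))"
      by (rule sum.cong) (use D'old uv in auto)
    also have "\<dots> = (\<Sum>x<k. D x) + (\<Sum>x<k. (if x = u then 1 else 0)) + (\<Sum>x<k. (if x = v then 1 else 0))"
      by (simp add: sum.distrib)
    also have "\<dots> = 4 * (k - t) + 2" using dsum uk vk by (simp add: D_def)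
    finally show "(\<Sum>x<Suc k. card {y. E' x y}) = 4 * (Suc k - t)" using tk by simp
  qed
  then show ?thesis by blast
qed


theorem claim3p1:
  "\<forall>g::nat. \<exists>t::nat. \<forall>k\<ge>t. \<exists>(V::nat set) E.
     simple_graph V E \<and> card V = k \<and> exactly_2_t_degenerate t V E \<and>
     bipartite V E \<and> girth_at_least g V E"
proof
  fix g :: nat
  define t :: nat where "t = 2 * 5 ^ g + 2"
  have main: "\<exists>E col. ginv g t k E col" if "t \<le> k" for k
    using that
  proof (induction k rule: dec_induct)
    case base
    show ?case using ginv_base by blast
  next
    case (step k)
    then obtain E col where "ginv g t k E col" by blast
    then show ?case using ginv_step step.hyps t_def by blast
  qed
  show "\<exists>t. \<forall>k\<ge>t. \<exists>(V::nat set) E.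
     simple_graph V E \<and> card V = k \<and> exactly_2_t_degenerate t V E \<and>
     bipartite V E \<and> girth_at_least g V E"
  proof (rule exI[of _ t], intro allI impI)
    fix k assume tk: "t \<le> k"
    then obtain E col where "ginv g t k E col" using main by blast
    then show "\<exists>(V::nat set) E.
     simple_graph V E \<and> card V = k \<and> exactly_2_t_degenerate t V E \<and>
     bipartite V E \<and> girth_at_least g V E" using ginv_final tk by blast
  qed
qed

end
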